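(* The closure $\overline{\mathrm{K\ddot ah}(X)}$ of the Kähler cone of $X$, viewed as a cone in $L_{\mathrm{ext}}^\vee\otimes\mathbb{R}$, is a cone of the Gröbner fan $G\Sigma$.
   Context: $N\cong\mathbb{Z}^n$, $M$ dual. $X$ is a smooth projective toric variety with fan $\Sigma$ and nef-partition $\Sigma(1)=I_1\sqcup\cdots\sqcup I_r$ (each $E_i=\sum_{\rho\in I_i}D_\rho$ nef), $I_i=\{\rho_{i,1},\dots,\rho_{i,n_i}\}$, $J=\{(i,j):1\le i\le r,0\le j\le n_i\}$, $\nu_{i,j}=(\rho_{i,j},e_i)$ ($j\ge1$), $\nu_{i,0}=(0,e_i)$ in $N\times\mathbb{Z}^r$, $\mathcal{A}=\{\nu_{i,j}:(i,j)\in J\}$. $A_{\mathrm{ext}}:\mathbb{Z}^J\to N\times\mathbb{Z}^r$, $e_{i,j}\mapsto\nu_{i,j}$ (surjective), $L_{\mathrm{ext}}=\ker A_{\mathrm{ext}}$, which is isomorphic (by forgetting the $(i,0)$ coordinates) to $L=\ker(\mathbb{Z}^I\to N)\cong H_2(X,\mathbb{Z})$; hence $H^2(X,\mathbb{R})\cong L^\vee\otimes\mathbb{R}\cong L_{\mathrm{ext}}^\vee\otimes\mathbb{R}$, which is also the quotient $\mathbb{R}^J/A_{\mathrm{ext}}^\intercal(M_\mathbb{R}\times\mathbb{R}^r)$. The toric ideal is $I_\mathcal{A}=\langle y^{\ell^+}-y^{\ell^-}:\ell\in L_{\mathrm{ext}}\rangle\subset\mathbb{C}[y_{i,j}:(i,j)\in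 J]$. Each weight $\omega\in\mathbb{R}^J$ gives the initial (leading term) ideal $\mathrm{LT}_\omega(I_\mathcal{A})$ (generated by the $\omega$-maximal-weight parts of elements of $I_\mathcal{A}$, the weight of $y^m$ being $\sum\omega_{i,j}m_{i,j}$); $\omega,\omega'$ are equivalent if $\mathrm{LT}_\omega(I_\mathcal{A})=\mathrm{LT}_{\omega'}(I_\mathcal{A})$. The equivalence classes (closures) form a fan in $\mathbb{R}^J$; its image in $L_{\mathrm{ext}}^\vee\otimes\mathbb{R}$ is the Gröbner fan $G\Sigma$. *)

theory Defs
  imports "HOL-Analysis.Analysis" "HOL-Library.Poly_Mapping"
begin

text \<open>N = Z^n is the integer lattice in real^'n. The rays Sigma(1) are indexed by a finite
 type 'r, with primitive generators u :: 'r => real^'n. Since a smooth fan is simplicial,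
 a cone of the fan is determined by its set of rays; the fan is a set Sig of subsets of 'r.\<close>

definition int_vec :: "real^'n \<Rightarrow> bool" where
  "int_vec x \<longleftrightarrow> (\<forall>i. x $ i \<in> \<int>)"

definition ray_cone :: "('r \<Rightarrow> real^'n) \<Rightarrow> 'r set \<Rightarrow> (real^'n) set" where
  "ray_cone u \<sigma> = {x. \<exists>c. (\<forall>\<rho>\<in>\<sigma>. 0 \<le> c \<rho>) \<and> x = (\<Sum>\<rho>\<in>\<sigma>. c \<rho> *\<^sub>R u \<rho>)}"

definition int_span :: "('r \<Rightarrow> real^'n) \<Rightarrow> 'r set \<Rightarrow> (real^'n) set" where
  "int_span u \<sigma> = {x. \<exists>c. (\<forall>\<rho>\<in>\<sigma>. c \<rho> \<in> \<int>) \<and> x = (\<Sum>\<rho>\<in>\<sigma>. c \<rho> *\<^sub>R u \<rho>)}"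

text \<open>A fan whose rays are exactly the u rho (with integral generators), all of whose cones are
 smooth (generated by part of a Z-basis of N).\<close>
definition smooth_fan :: "('r::finite \<Rightarrow> real^'n) \<Rightarrow> 'r set set \<Rightarrow> bool" where
  "smooth_fan u Sig \<longleftrightarrow>
     (\<forall>\<rho>. int_vec (u \<rho>) \<and> {\<rho>} \<in> Sig) \<and>
     (\<forall>\<sigma>\<in>Sig. \<forall>\<tau>. \<tau> \<subseteq> \<sigma> \<longrightarrow> \<tau> \<in> Sig) \<and>
     (\<forall>\<sigma>\<in>Sig. inj_on u \<sigma> \<and> \<not> dependent (u ` \<sigma>)) \<and>
     (\<forall>\<sigma>\<in>Sig. \<forall>x. int_vec x \<and> x \<in> span (u ` \<sigma>) \<longrightarrow> x \<in> int_span u \<sigma>) \<and>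
     (\<forall>\<sigma>\<in>Sig. \<forall>\<tau>\<in>Sig. ray_cone u \<sigma> \<inter> ray_cone u \<tau> = ray_cone u (\<sigma> \<inter> \<tau>))"

definition complete_fan :: "('r \<Rightarrow> real^'n) \<Rightarrow> 'r set set \<Rightarrow> bool" where
  "complete_fan u Sig \<longleftrightarrow> (\<Union>\<sigma>\<in>Sig. ray_cone u \<sigma>) = UNIV"

definition max_cones :: "('r \<Rightarrow> real^'n) \<Rightarrow> 'r set set \<Rightarrow> 'r set set" where
  "max_cones u Sig = {\<sigma>\<in>Sig. card \<sigma> = CARD('n)}"

text \<open>Torus-invariant R-divisor D = sum a_rho D_rho. Nef: the support function is convex,
 i.e. on each maximal cone it is given by some m in M_R with <m,u_rho> = -a_rho on the cone and
 >= -a_rho off it. Ample: strictly convex (strict inequality off the cone).\<close>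
definition nef_div :: "('r \<Rightarrow> real^'n) \<Rightarrow> 'r set set \<Rightarrow> ('r \<Rightarrow> real) \<Rightarrow> bool" where
  "nef_div u Sig a \<longleftrightarrow> (\<forall>\<sigma>\<in>max_cones u Sig. \<exists>m::real^'n.
      (\<forall>\<rho>\<in>\<sigma>. m \<bullet> u \<rho> = - a \<rho>) \<and> (\<forall>\<rho>. \<rho> \<notin> \<sigma> \<longrightarrow> m \<bullet> u \<rho> \<ge> - a \<rho>))"

definition ample_div :: "('r \<Rightarrow> real^'n) \<Rightarrow> 'r set set \<Rightarrow> ('r \<Rightarrow> real) \<Rightarrow> bool" where
  "ample_div u Sig a \<longleftrightarrow> (\<forall>\<sigma>\<in>max_cones u Sig. \<exists>m::real^'n.
      (\<forall>\<rho>\<in>\<sigma>. m \<bullet> u \<rho> = - a \<rho>) \<and> (\<forall>\<rho>. \<rho> \<notin> \<sigma> \<longrightarrow> m \<bullet> u \<rho> > - a \<rho>))"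

definition projective_fan :: "('r \<Rightarrow> real^'n) \<Rightarrow> 'r set set \<Rightarrow> bool" where
  "projective_fan u Sig \<longleftrightarrow> (\<exists>a. ample_div u Sig a)"

text \<open>Nef-partition given by p : Sigma(1) -> 'k (surjective), I_k = p^{-1}(k).\<close>
definition nef_partition :: "('r \<Rightarrow> real^'n) \<Rightarrow> 'r set set \<Rightarrow> ('r \<Rightarrow> 'k) \<Rightarrow> bool" where
  "nef_partition u Sig p \<longleftrightarrow> surj p \<and>
     (\<forall>k. nef_div u Sig (\<lambda>\<rho>. if p \<rho> = k then 1 else 0))"

text \<open>J = Sigma(1) + {1..r}: Inl rho_{i,j} stands for (i,j) with j >= 1, Inr i for (i,0).\<close>

definition L_ext :: "('r::finite \<Rightarrow> real^'n) \<Rightarrow> ('r \<Rightarrow> 'k::finite) \<Rightarrow> (('r + 'k) \<Rightarrow> int) set" where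
  "L_ext u p = {l. (\<Sum>\<rho>\<in>UNIV. of_int (l (Inl \<rho>)) *\<^sub>R u \<rho>) = 0 \<and>
                  (\<forall>k. (\<Sum>\<rho>\<in>{\<rho>. p \<rho> = k}. l (Inl \<rho>)) + l (Inr k) = 0)}"

text \<open>The divisor class in H^2(X,R) of a weight w in R^J, via R^J/A_ext^T(M_R x R^r) = L_ext^dual
 = L^dual = H^2(X,R) (forgetting the (i,0) coordinates): the class of sum (w_{i,j}-w_{i,0}) D_{rho_{i,j}}.\<close>
definition div_of_weight :: "('r::finite \<Rightarrow> 'k::finite) \<Rightarrow> real^('r + 'k) \<Rightarrow> ('r \<Rightarrow> real)" where
  "div_of_weight p w = (\<lambda>\<rho>. w $ Inl \<rho> - w $ Inr (p \<rho>))"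

text \<open>Kaehler cone of X, pulled back to R^J (classes of ample R-divisors).\<close>
definition kahler_pre :: "('r::finite \<Rightarrow> real^'n) \<Rightarrow> 'r set set \<Rightarrow> ('r \<Rightarrow> 'k::finite) \<Rightarrow> (real^('r + 'k)) set" where
  "kahler_pre u Sig p = {w. ample_div u Sig (div_of_weight p w)}"

type_synonym 'v mpoly = "('v \<Rightarrow>\<^sub>0 nat) \<Rightarrow>\<^sub>0 complex"

definition ideal_gen :: "'v mpoly set \<Rightarrow> 'v mpoly set" where
  "ideal_gen G = {f. \<exists>F q. finite F \<and> F \<subseteq> G \<and> f = (\<Sum>g\<in>F. q g * g)}"

definition monom_of :: "('v::finite \<Rightarrow> nat) \<Rightarrow> ('v \<Rightarrow>\<^sub>0 nat)" where
  "monom_of e = Abs_poly_mapping e"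

definition binom :: "('v::finite \<Rightarrow> int) \<Rightarrow> 'v mpoly" where
  "binom l = Poly_Mapping.single (monom_of (\<lambda>v. nat (l v))) 1
           - Poly_Mapping.single (monom_of (\<lambda>v. nat (- l v))) 1"

definition toric_ideal :: "('r::finite \<Rightarrow> real^'n) \<Rightarrow> ('r \<Rightarrow> 'k::finite) \<Rightarrow> ('r + 'k) mpoly set" where
  "toric_ideal u p = ideal_gen (binom ` L_ext u p)"

definition mweight :: "real^'v \<Rightarrow> ('v::finite \<Rightarrow>\<^sub>0 nat) \<Rightarrow> real" where
  "mweight w m = (\<Sum>v\<in>UNIV. w $ v * of_nat (Poly_Mapping.lookup m v))"

definition init_form :: "real^'v \<Rightarrow> ('v::finite) mpoly \<Rightarrow> 'v mpoly" where
  "init_form w f = Abs_poly_mapping (\<lambda>m.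
      if mweight w m = Max (mweight w ` Poly_Mapping.keys f) then Poly_Mapping.lookup f m else 0)"

definition init_ideal :: "real^'v \<Rightarrow> ('v::finite) mpoly set \<Rightarrow> 'v mpoly set" where
  "init_ideal w I = ideal_gen (init_form w ` I)"

definition groebner_cone :: "('v::finite) mpoly set \<Rightarrow> real^'v \<Rightarrow> (real^'v) set" where
  "groebner_cone I w = closure {w'. init_ideal w' I = init_ideal w I}"

end

theory Submission
  imports Defs
begin


abbreviation X :: "('v \<Rightarrow>\<^sub>0 nat) \<Rightarrow> 'v mpoly" where "X e \<equiv> Poly_Mapping.single e (1::complex)"

definition degN :: "('r::finite \<Rightarrow> real^'n) \<Rightarrow> ('r + 'k \<Rightarrow>\<^sub>0 nat) \<Rightarrow> real^'n" where
  "degN u e = (\<Sum>\<rho>\<in>UNIV. real (Poly_Mapping.lookup e (Inl \<rho>)) *\<^sub>R u \<rho>)"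

definition degK :: "('r::finite \<Rightarrow> 'k) \<Rightarrow> ('r + 'k \<Rightarrow>\<^sub>0 nat) \<Rightarrow> 'k \<Rightarrow> int" where
  "degK p e k = (\<Sum>\<rho>\<in>{\<rho>. p \<rho> = k}. int (Poly_Mapping.lookup e (Inl \<rho>))) + int (Poly_Mapping.lookup e (Inr k))"

definition sdeg where "sdeg u p e e' \<longleftrightarrow> degN u e = degN u e' \<and> degK p e = degK p e'"

lemma poly_decomp: "q = (\<Sum>t\<in>Poly_Mapping.keys q. Poly_Mapping.single t (Poly_Mapping.lookup q t))"
proof (rule poly_mapping_eqI)
  fix k
  have "Poly_Mapping.lookup (\<Sum>t\<in>Poly_Mapping.keys q. Poly_Mapping.single t (Poly_Mapping.lookup q t)) k
      = (\<Sum>t\<in>Poly_Mapping.keys q. (if t = k then Poly_Mapping.lookup q t else 0))"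
    by (simp add: lookup_sum lookup_single when_def)
  also have "\<dots> = Poly_Mapping.lookup q k" by (simp add: in_keys_iff)
  finally show "Poly_Mapping.lookup q k = Poly_Mapping.lookup (\<Sum>t\<in>Poly_Mapping.keys q. Poly_Mapping.single t (Poly_Mapping.lookup q t)) k" by simp
qed

lemma lookup_monom_of[simp]: "Poly_Mapping.lookup (monom_of (e::'v::finite \<Rightarrow> nat)) = e"
  unfolding monom_of_def by (simp)

lemma binom_in:
  fixes u :: "'r::finite \<Rightarrow> real^'n" and p :: "'r \<Rightarrow> 'k::finite"
  assumes "sdeg u p a m"
  shows "X a - X m \<in> toric_ideal u p"
proof -
  define l where "l v = int (Poly_Mapping.lookup a v) - int (Poly_Mapping.lookup m v)" for v
  define c where "c = Abs_poly_mapping (\<lambda>v. min (Poly_Mapping.lookup a v) (Poly_Mapping.lookup m v))"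
  have lc: "Poly_Mapping.lookup c v = min (Poly_Mapping.lookup a v) (Poly_Mapping.lookup m v)" for v
    unfolding c_def by simp
  have lL: "l \<in> L_ext u p"
  proof -
    have "(\<Sum>\<rho>\<in>UNIV. of_int (l (Inl \<rho>)) *\<^sub>R u \<rho>) = degN u a - degN u m"
      by (simp add: l_def degN_def scaleR_diff_left sum_subtractf)
    moreover have "(\<Sum>\<rho>\<in>{\<rho>. p \<rho> = k}. l (Inl \<rho>)) + l (Inr k) = degK p a k - degK p m k" for k
      by (simp add: l_def degK_def sum_subtractf)
    ultimately show ?thesis using assms unfolding sdeg_def L_ext_def by simp
  qed
  have ea: "c + monom_of (\<lambda>v. nat (l v)) = a"
    by (rule poly_mapping_eqI) (simp add: lookup_add lc l_def)
  have em: "c + monom_of (\<lambda>v. nat (- l v)) = m"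
    by (rule poly_mapping_eqI) (simp add: lookup_add lc l_def)
  have "X c * binom l = X a - X m"
    unfolding binom_def by (simp add: right_diff_distrib mult_single ea em)
  then show ?thesis unfolding toric_ideal_def ideal_gen_def
    using lL by (intro CollectI exI[of _ "{binom l}"] exI[of _ "\<lambda>_. X c"]) auto
qed

definition psi :: "('r::finite \<Rightarrow> real^'n) \<Rightarrow> ('r \<Rightarrow> 'k) \<Rightarrow> ((real^'n) \<times> ('k \<Rightarrow> int)) \<Rightarrow> ('r + 'k) mpoly \<Rightarrow> complex" where
  "psi u p b f = (\<Sum>e\<in>Poly_Mapping.keys f. if (degN u e, degK p e) = b then Poly_Mapping.lookup f e else 0)"

lemma psi_superset:
  assumes "finite S" "Poly_Mapping.keys f \<subseteq> S"
  shows "psi u p b f = (\<Sum>e\<in>S. if (degN u e, degK p e) = b then Poly_Mapping.lookup f e else 0)"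
  unfolding psi_def using assms
  by (intro sum.mono_neutral_left) (auto simp: in_keys_iff)

lemma psi_add: "psi u p b (f + g) = psi u p b f + psi u p b g"
proof -
  let ?S = "Poly_Mapping.keys f \<union> Poly_Mapping.keys g"
  have "psi u p b (f+g) = (\<Sum>e\<in>?S. if (degN u e, degK p e) = b then Poly_Mapping.lookup (f+g) e else 0)"
    by (rule psi_superset) (auto simp: keys_add)
  also have "\<dots> = (\<Sum>e\<in>?S. if (degN u e, degK p e) = b then Poly_Mapping.lookup f e else 0)
     + (\<Sum>e\<in>?S. if (degN u e, degK p e) = b then Poly_Mapping.lookup g e else 0)"
    by (simp add: lookup_add sum.distrib[symmetric] if_distrib cong: if_cong)
  also have "\<dots> = psi u p b f + psi u p b g"
    by (simp add: psi_superset[symmetric])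
  finally show ?thesis .
qed

lemma psi_zero[simp]: "psi u p b 0 = 0" by (simp add: psi_def)

lemma psi_sum: "finite F \<Longrightarrow> psi u p b (\<Sum>g\<in>F. h g) = (\<Sum>g\<in>F. psi u p b (h g))"
  by (induction F rule: finite_induct) (auto simp: psi_add)

lemma psi_single: "psi u p b (Poly_Mapping.single e c) = (if (degN u e, degK p e) = b then c else 0)"
  by (cases "c = 0") (auto simp: psi_def)

lemma psi_uminus: "psi u p b (- f) = - psi u p b f"
  unfolding psi_def by (simp add: sum_negf[symmetric] if_distrib cong: if_cong)

lemma psi_diff: "psi u p b (f - g) = psi u p b f - psi u p b g"
  using psi_add[of u p b f "-g"] by (simp add: psi_uminus)

lemma degN_add: "degN u (t + a) = degN u t + degN u a"
  by (simp add: degN_def lookup_add scaleR_add_left sum.distrib)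

lemma degK_add: "degK p (t + a) k = degK p t k + degK p a k"
  by (simp add: degK_def lookup_add sum.distrib)

lemma natdiff: "real (nat x) - real (nat (- x)) = real_of_int x"
  by (cases "x \<ge> 0") auto

lemma natdiff_int: "int (nat x) - int (nat (- x)) = x"
  by (cases "x \<ge> 0") auto

lemma degK_add': "degK p (t + a) = (\<lambda>k. degK p t k + degK p a k)"
  by (simp add: degK_add fun_eq_iff)

lemma psi_binom:
  fixes u :: "'r::finite \<Rightarrow> real^'n" and p :: "'r \<Rightarrow> 'k::finite"
  assumes "l \<in> L_ext u p"
  shows "psi u p b (q * binom l) = 0"
proof -
  let ?ap = "monom_of (\<lambda>v. nat (l v))" and ?am = "monom_of (\<lambda>v. nat (- l v))"
  have dN: "degN u ?ap = degN u ?am"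
  proof -
    have "degN u ?ap - degN u ?am = (\<Sum>\<rho>\<in>UNIV. of_int (l (Inl \<rho>)) *\<^sub>R u \<rho>)"
      unfolding degN_def by (simp add: sum_subtractf[symmetric] scaleR_diff_left[symmetric])
        (rule sum.cong; simp add: natdiff)
    then show ?thesis using assms unfolding L_ext_def by simp
  qed
  have dK: "degK p ?ap = degK p ?am"
  proof
    fix k
    have "degK p ?ap k - degK p ?am k = (\<Sum>\<rho>\<in>{\<rho>. p \<rho> = k}. l (Inl \<rho>)) + l (Inr k)"
      unfolding degK_def by (simp add: sum_subtractf[symmetric]) (smt (verit) sum.cong)
    then show "degK p ?ap k = degK p ?am k" using assms unfolding L_ext_def by simp
  qed
  have "q * binom l = (\<Sum>t\<in>Poly_Mapping.keys q. Poly_Mapping.single (t + ?ap) (Poly_Mapping.lookup q t) - Poly_Mapping.single (t + ?am) (Poly_Mapping.lookup q t))"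
    apply (subst poly_decomp[of q])
    unfolding binom_def by (simp add: sum_distrib_right right_diff_distrib mult_single sum_subtractf)
  then show ?thesis
    by (simp add: psi_sum psi_diff psi_single degN_add degK_add' dN dK)
qed

lemma psi_ideal:
  fixes u :: "'r::finite \<Rightarrow> real^'n" and p :: "'r \<Rightarrow> 'k::finite"
  assumes "f \<in> toric_ideal u p"
  shows "psi u p b f = 0"
proof -
  obtain F q where "finite F" "F \<subseteq> binom ` L_ext u p" "f = (\<Sum>g\<in>F. q g * g)"
    using assms unfolding toric_ideal_def ideal_gen_def by blast
  moreover have "psi u p b (q g * g) = 0" if "g \<in> F" for g
    using that \<open>F \<subseteq> _\<close> psi_binom by blast
  ultimately show ?thesis by (simp add: psi_sum)
qed



lemma lookup_init_form:
  "Poly_Mapping.lookup (init_form w f) m =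
   (if mweight w m = Max (mweight w ` Poly_Mapping.keys f) then Poly_Mapping.lookup f m else 0)"
proof -
  have "finite {m. (if mweight w m = Max (mweight w ` Poly_Mapping.keys f) then Poly_Mapping.lookup f m else 0) \<noteq> 0}"
    by (rule finite_subset[of _ "Poly_Mapping.keys f"]) (auto simp: in_keys_iff)
  then show ?thesis unfolding init_form_def by simp
qed

lemma keys_XX: "a \<noteq> m \<Longrightarrow> Poly_Mapping.keys (X a - X m) = {a, m}"
  by (auto simp: in_keys_iff lookup_minus lookup_single when_def split: if_splits)

lemma lookup_XX: "a \<noteq> m \<Longrightarrow> Poly_Mapping.lookup (X a - X m) e = (if e = a then 1 else if e = m then -1 else 0)"
  by (auto simp: lookup_minus lookup_single when_def)

lemma init_XX:
  assumes "a \<noteq> m" "mweight w m < mweight w a"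
  shows "init_form w (X a - X m) = X a"
proof (rule poly_mapping_eqI)
  fix e
  have mx: "Max (mweight w ` Poly_Mapping.keys (X a - X m)) = mweight w a"
    using assms by (simp add: keys_XX)
  show "Poly_Mapping.lookup (init_form w (X a - X m)) e = Poly_Mapping.lookup (X a) e"
    using assms by (auto simp: lookup_init_form mx lookup_XX lookup_single when_def)
qed

lemma X_eq_iff: "X e = X e' \<longleftrightarrow> e = e'"
  by (metis lookup_single_eq lookup_single_not_eq zero_neq_one)

lemma in_ideal_gen: "g \<in> G \<Longrightarrow> g \<in> ideal_gen G"
  unfolding ideal_gen_def by (intro CollectI exI[of _ "{g}"] exI[of _ "\<lambda>_. 1"]) auto

lemma sdeg_sym: "sdeg u p a b \<Longrightarrow> sdeg u p b a" by (auto simp: sdeg_def)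

lemma ideal_NS:
  assumes hdown: "\<And>s t. std (s + t) \<Longrightarrow> std t"
    and G: "G \<subseteq> {g. \<forall>e\<in>Poly_Mapping.keys g. \<not> std e}"
  shows "ideal_gen G \<subseteq> {g. \<forall>e\<in>Poly_Mapping.keys g. \<not> std e}"
proof
  fix f assume "f \<in> ideal_gen G"
  then obtain F q where F: "finite F" "F \<subseteq> G" "f = (\<Sum>g\<in>F. q g * g)"
    unfolding ideal_gen_def by blast
  have mul: "\<forall>e\<in>Poly_Mapping.keys (h * g). \<not> std e" if "g \<in> G" for g h
  proof
    fix e assume "e \<in> Poly_Mapping.keys (h * g)"
    then obtain s t where "e = s + t" "t \<in> Poly_Mapping.keys g"
      using keys_mult by blast
    then show "\<not> std e" using G that hdown by blast
  qed
  have "\<forall>e\<in>Poly_Mapping.keys (\<Sum>g\<in>F'. q g * g). \<not> std e" if "F' \<subseteq> F" for F'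
    using finite_subset[OF that F(1)] that
  proof (induction F' rule: finite_induct)
    case empty then show ?case by simp
  next
    case (insert x F')
    then show ?case using mul[of x "q x"] F(2) keys_add by fastforce
  qed
  then show "f \<in> {g. \<forall>e\<in>Poly_Mapping.keys g. \<not> std e}" using F by auto
qed

lemma P1_abstract:
  fixes u :: "'r::finite \<Rightarrow> real^'n" and p :: "'r \<Rightarrow> 'k::finite"
    and w :: "real^('r + 'k)"
  assumes hA: "\<And>a. \<exists>m. std m \<and> sdeg u p m a"
    and hB: "\<And>a m. std m \<Longrightarrow> sdeg u p a m \<Longrightarrow> a \<noteq> m \<Longrightarrow> mweight w m < mweight w a"
    and hdown: "\<And>s t. std (s + t) \<Longrightarrow> std t"
  shows "init_ideal w (toric_ideal u p) = {g. \<forall>e\<in>Poly_Mapping.keys g. \<not> std e}"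
proof
  show "init_ideal w (toric_ideal u p) \<subseteq> {g. \<forall>e\<in>Poly_Mapping.keys g. \<not> std e}"
    unfolding init_ideal_def
  proof (rule ideal_NS[OF hdown], safe)
    fix f m assume fI: "f \<in> toric_ideal u p" and mk: "m \<in> Poly_Mapping.keys (init_form w f)"
      and sm: "std m"
    have mk2: "m \<in> Poly_Mapping.keys f" and mw: "mweight w m = Max (mweight w ` Poly_Mapping.keys f)"
      using mk by (auto simp: in_keys_iff lookup_init_form split: if_splits)
    let ?b = "(degN u m, degK p m)"
    have "psi u p ?b f = 0" by (rule psi_ideal[OF fI])
    moreover have "psi u p ?b f = Poly_Mapping.lookup f m"
    proof -
      have "psi u p ?b f = (if (degN u m, degK p m) = ?b then Poly_Mapping.lookup f m else 0)
          + (\<Sum>e\<in>Poly_Mapping.keys f - {m}. if (degN u e, degK p e) = ?b then Poly_Mapping.lookup f e else 0)"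
        unfolding psi_def using mk2 by (simp add: sum.remove)
      moreover have "(\<Sum>e\<in>Poly_Mapping.keys f - {m}. if (degN u e, degK p e) = ?b then Poly_Mapping.lookup f e else 0) = 0"
      proof (rule sum.neutral, rule ballI)
        fix e assume e: "e \<in> Poly_Mapping.keys f - {m}"
        show "(if (degN u e, degK p e) = ?b then Poly_Mapping.lookup f e else 0) = 0"
        proof (rule ccontr)
          assume "\<not> ?thesis"
          then have "sdeg u p e m" by (auto simp: sdeg_def split: if_splits)
          then have "mweight w m < mweight w e" using hB sm e by blast
          moreover have "mweight w e \<le> mweight w m" using mw e by simp
          ultimately show False by simp
        qed
      qed
      ultimately show ?thesis by simp
    qed
    ultimately show False using mk2 by (simp add: in_keys_iff)
  qed
next
  show "{g. \<forall>e\<in>Poly_Mapping.keys g. \<not> std e} \<subseteq> init_ideal w (toric_ideal u p)"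
  proof
    fix g :: "('r+'k) mpoly" assume g: "g \<in> {g. \<forall>e\<in>Poly_Mapping.keys g. \<not> std e}"
    have Xin: "X e \<in> init_form w ` toric_ideal u p" if "e \<in> Poly_Mapping.keys g" for e
    proof -
      obtain m where m: "std m" "sdeg u p m e" using hA by blast
      have ne: "e \<noteq> m" using m g that by auto
      have "mweight w m < mweight w e" using hB m ne sdeg_sym by blast
      then have "init_form w (X e - X m) = X e" using init_XX ne by blast
      moreover have "X e - X m \<in> toric_ideal u p" using binom_in sdeg_sym m by blast
      ultimately show ?thesis by (metis image_eqI)
    qed
    let ?F = "X ` Poly_Mapping.keys g"
    define q :: "('r+'k) mpoly \<Rightarrow> ('r+'k) mpoly" where "q h = Poly_Mapping.single 0 (Poly_Mapping.lookup g (inv_into (Poly_Mapping.keys g) X h))" for h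
    have inj: "inj_on X (Poly_Mapping.keys g)"
      by (auto simp: inj_on_def X_eq_iff)
    have "(\<Sum>h\<in>?F. q h * h) = (\<Sum>e\<in>Poly_Mapping.keys g. q (X e) * X e)"
      by (simp add: sum.reindex[OF inj])
    also have "\<dots> = (\<Sum>e\<in>Poly_Mapping.keys g. Poly_Mapping.single e (Poly_Mapping.lookup g e))"
      by (rule sum.cong) (simp_all add: q_def mult_single inv_into_f_f[OF inj])
    also have "\<dots> = g" by (rule poly_decomp[symmetric])
    finally have "g = (\<Sum>h\<in>?F. q h * h)" ..
    then show "g \<in> init_ideal w (toric_ideal u p)"
      unfolding init_ideal_def ideal_gen_def using Xin
      by (intro CollectI exI[of _ ?F] exI[of _ q]) auto
  qed
qed

lemma P2_abstract:
  fixes u :: "'r::finite \<Rightarrow> real^'n" and p :: "'r \<Rightarrow> 'k::finite"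
    and w :: "real^('r + 'k)"
  assumes eq: "init_ideal w (toric_ideal u p) = {g. \<forall>e\<in>Poly_Mapping.keys g. \<not> std e}"
    and sm: "std m" and sd: "sdeg u p a m"
  shows "mweight w m \<le> mweight w a"
proof (rule ccontr)
  assume lt: "\<not> ?thesis"
  then have ne: "a \<noteq> m" by auto
  let ?f = "X a - X m"
  have "?f \<in> toric_ideal u p" using binom_in sd by blast
  then have "init_form w ?f \<in> init_ideal w (toric_ideal u p)"
    unfolding init_ideal_def by (intro in_ideal_gen) auto
  moreover have "Poly_Mapping.lookup (init_form w ?f) m \<noteq> 0"
    using ne lt by (simp add: lookup_init_form keys_XX lookup_XX max_def)
  ultimately show False using eq sm by (auto simp: in_keys_iff)
qed



lemma ray_cone_hull:
  fixes u :: "'r::finite \<Rightarrow> real^'n"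
  shows "ray_cone u \<sigma> = convex_cone hull (u ` \<sigma>)"
proof
  show "ray_cone u \<sigma> \<subseteq> convex_cone hull (u ` \<sigma>)"
  proof
    fix x assume "x \<in> ray_cone u \<sigma>"
    then obtain c where c: "\<forall>\<rho>\<in>\<sigma>. 0 \<le> c \<rho>" "x = (\<Sum>\<rho>\<in>\<sigma>. c \<rho> *\<^sub>R u \<rho>)"
      unfolding ray_cone_def by blast
    have "(\<Sum>\<rho>\<in>S. c \<rho> *\<^sub>R u \<rho>) \<in> convex_cone hull (u ` \<sigma>)" if "S \<subseteq> \<sigma>" for S
      using finite[of S] that
    proof (induction S rule: finite_induct)
      case empty then show ?case by (simp add: convex_cone_hull_contains_0)
    next
      case (insert a S)
      then show ?case
        by (simp, intro convex_cone_hull_add convex_cone_hull_mul)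
          (auto simp: c hull_inc)
    qed
    then show "x \<in> convex_cone hull (u ` \<sigma>)" using c by simp
  qed
next
  show "convex_cone hull (u ` \<sigma>) \<subseteq> ray_cone u \<sigma>"
  proof (rule hull_minimal)
    show "u ` \<sigma> \<subseteq> ray_cone u \<sigma>"
    proof
      fix x assume "x \<in> u ` \<sigma>"
      then obtain \<rho> where r: "\<rho> \<in> \<sigma>" "x = u \<rho>" by blast
      have "(\<Sum>\<rho>'\<in>\<sigma>. (if \<rho>' = \<rho> then 1 else 0) *\<^sub>R u \<rho>') = (\<Sum>\<rho>'\<in>\<sigma>. if \<rho>' = \<rho> then u \<rho>' else 0)"
        by (rule sum.cong) auto
      also have "\<dots> = u \<rho>" using r by simp
      finally have "(\<Sum>\<rho>'\<in>\<sigma>. (if \<rho>' = \<rho> then 1 else 0) *\<^sub>R u \<rho>') = u \<rho>" .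
      then show "x \<in> ray_cone u \<sigma>" unfolding ray_cone_def using r
        by (intro CollectI exI[of _ "\<lambda>\<rho>'. if \<rho>' = \<rho> then 1 else 0"]) auto
    qed
    show "convex_cone (ray_cone u \<sigma>)"
      unfolding convex_cone_iff
    proof (intro conjI ballI allI impI)
      show "0 \<in> ray_cone u \<sigma>" unfolding ray_cone_def
        by (intro CollectI exI[of _ "\<lambda>_. 0"]) auto
      fix x assume "x \<in> ray_cone u \<sigma>"
      then obtain c where c: "\<forall>\<rho>\<in>\<sigma>. 0 \<le> c \<rho>" "x = (\<Sum>\<rho>\<in>\<sigma>. c \<rho> *\<^sub>R u \<rho>)"
        unfolding ray_cone_def by blast
      { fix y assume "y \<in> ray_cone u \<sigma>"
        then obtain d where d: "\<forall>\<rho>\<in>\<sigma>. 0 \<le> d \<rho>" "y = (\<Sum>\<rho>\<in>\<sigma>. d \<rho> *\<^sub>R u \<rho>)"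
          unfolding ray_cone_def by blast
        show "x + y \<in> ray_cone u \<sigma>" unfolding ray_cone_def
          using c d by (intro CollectI exI[of _ "\<lambda>\<rho>. c \<rho> + d \<rho>"])
            (auto simp: scaleR_add_left sum.distrib)
      }
      fix t :: real assume "0 \<le> t"
      then show "t *\<^sub>R x \<in> ray_cone u \<sigma>" unfolding ray_cone_def
        using c by (intro CollectI exI[of _ "\<lambda>\<rho>. t * c \<rho>"])
          (auto simp: scaleR_sum_right)
    qed
  qed
qed

lemma ray_cone_span: "ray_cone u \<sigma> \<subseteq> span (u ` \<sigma>)"
proof
  fix x assume "x \<in> ray_cone u \<sigma>"
  then obtain c where c: "x = (\<Sum>\<rho>\<in>\<sigma>. c \<rho> *\<^sub>R u \<rho>)"
    unfolding ray_cone_def by blast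
  have "(\<Sum>\<rho>\<in>\<sigma>. c \<rho> *\<^sub>R u \<rho>) \<in> span (u ` \<sigma>)"
    by (rule span_sum) (simp add: span_mul span_base)
  then show "x \<in> span (u ` \<sigma>)" using c by simp
qed

lemma smooth_indep:
  fixes u :: "'r::finite \<Rightarrow> real^'n"
  assumes sm: "smooth_fan u Sig" and s: "\<sigma> \<in> Sig"
    and eq: "(\<Sum>\<rho>\<in>\<sigma>. c \<rho> *\<^sub>R u \<rho>) = 0" and r: "\<rho> \<in> \<sigma>"
  shows "c \<rho> = 0"
proof (rule ccontr)
  assume ne: "c \<rho> \<noteq> 0"
  have inj: "inj_on u \<sigma>" and ind: "\<not> dependent (u ` \<sigma>)" using sm s unfolding smooth_fan_def by auto
  define f where "f v = c (inv_into \<sigma> u v)" for v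
  have "(\<Sum>v\<in>u ` \<sigma>. f v *\<^sub>R v) = (\<Sum>\<rho>\<in>\<sigma>. c \<rho> *\<^sub>R u \<rho>)"
    by (simp add: sum.reindex[OF inj] f_def inv_into_f_f[OF inj])
  moreover have "\<exists>v\<in>u ` \<sigma>. f v \<noteq> 0"
    using r ne by (intro bexI[of _ "u \<rho>"]) (auto simp: f_def inv_into_f_f[OF inj])
  ultimately have "dependent (u ` \<sigma>)" using eq
    by (subst dependent_finite) auto
  then show False using ind by blast
qed

lemma smooth_coeff_eq:
  fixes u :: "'r::finite \<Rightarrow> real^'n"
  assumes sm: "smooth_fan u Sig" and s: "\<sigma> \<in> Sig"
    and eq: "(\<Sum>\<rho>\<in>\<sigma>. c \<rho> *\<^sub>R u \<rho>) = (\<Sum>\<rho>\<in>\<sigma>. d \<rho> *\<^sub>R u \<rho>)" and r: "\<rho> \<in> \<sigma>"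
  shows "c \<rho> = d \<rho>"
proof -
  have "(\<Sum>\<rho>\<in>\<sigma>. (c \<rho> - d \<rho>) *\<^sub>R u \<rho>) = 0"
    using eq by (simp add: scaleR_diff_left sum_subtractf)
  then show ?thesis using smooth_indep[OF sm s _ r] by fastforce
qed

lemma card_u_image:
  fixes u :: "'r::finite \<Rightarrow> real^'n"
  assumes sm: "smooth_fan u Sig" and s: "\<sigma> \<in> Sig"
  shows "card (u ` \<sigma>) = card \<sigma>" "card \<sigma> \<le> CARD('n)"
proof -
  have inj: "inj_on u \<sigma>" and ind: "\<not> dependent (u ` \<sigma>)" using sm s unfolding smooth_fan_def by auto
  show "card (u ` \<sigma>) = card \<sigma>" by (rule card_image[OF inj])
  then show "card \<sigma> \<le> CARD('n)" using independent_bound[OF ind] by simp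
qed

lemma span_max:
  fixes u :: "'r::finite \<Rightarrow> real^'n"
  assumes sm: "smooth_fan u Sig" and s: "\<sigma> \<in> max_cones u Sig"
  shows "span (u ` \<sigma>) = UNIV"
proof -
  have s': "\<sigma> \<in> Sig" "card \<sigma> = CARD('n)" using s unfolding max_cones_def by auto
  have ind: "\<not> dependent (u ` \<sigma>)" using sm s' unfolding smooth_fan_def by auto
  have "UNIV \<subseteq> span (u ` \<sigma>)"
    by (rule card_ge_dim_independent[OF _ ind]) (use card_u_image[OF sm s'(1)] s' in auto)
  then show ?thesis by auto
qed

lemma coverage:
  fixes u :: "'r::finite \<Rightarrow> real^'n"
  assumes sm: "smooth_fan u Sig" and cf: "complete_fan u Sig"
  shows "\<exists>\<sigma>\<in>max_cones u Sig. x \<in> ray_cone u \<sigma>"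
proof (rule ccontr)
  assume nx: "\<not> ?thesis"
  define U where "U = (\<Union>\<sigma>\<in>max_cones u Sig. ray_cone u \<sigma>)"
  have "closed U" unfolding U_def
    by (intro closed_UN) (auto simp: ray_cone_hull closed_convex_cone_hull)
  moreover have "x \<notin> U" using nx unfolding U_def by blast
  ultimately have "open (- U)" "x \<in> - U" by auto
  then obtain e where e: "e > 0" "ball x e \<subseteq> - U"
    using open_contains_ball by blast
  define Z where "Z = (\<Union>\<sigma>\<in>{\<sigma>\<in>Sig. card \<sigma> < CARD('n)}. span (u ` \<sigma>))"
  have "negligible Z" unfolding Z_def
  proof (intro negligible_Union)
    show "finite ((\<lambda>\<sigma>. span (u ` \<sigma>)) ` {\<sigma> \<in> Sig. card \<sigma> < CARD('n)})" by simp
    fix T assume "T \<in> (\<lambda>\<sigma>. span (u ` \<sigma>)) ` {\<sigma> \<in> Sig. card \<sigma> < CARD('n)}"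
    then obtain \<sigma> where "\<sigma> \<in> Sig" "card \<sigma> < CARD('n)" "T = span (u ` \<sigma>)" by blast
    moreover have "dim (u ` \<sigma>) \<le> card (u ` \<sigma>)" by (rule dim_le_card') simp
    ultimately show "negligible T"
      using card_u_image[OF sm] by (intro negligible_lowdim) auto
  qed
  then have "\<not> ball x e \<subseteq> Z"
    using open_not_negligible[of "ball x e"] e(1) negligible_subset by auto
  then obtain y where y: "y \<in> ball x e" "y \<notin> Z" by blast
  obtain \<sigma> where s: "\<sigma> \<in> Sig" "y \<in> ray_cone u \<sigma>"
    using cf unfolding complete_fan_def by blast
  have "card \<sigma> \<le> CARD('n)" using card_u_image[OF sm s(1)] by simp
  moreover have "\<not> card \<sigma> < CARD('n)"
  proof
    assume "card \<sigma> < CARD('n)"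
    then have "span (u ` \<sigma>) \<subseteq> Z" unfolding Z_def using s(1) by blast
    then show False using s(2) y(2) ray_cone_span by blast
  qed
  ultimately have "\<sigma> \<in> max_cones u Sig" using s unfolding max_cones_def by auto
  then have "y \<in> U" using s unfolding U_def by blast
  then show False using y e by blast
qed



lemma lookup_Abs_fin[simp]: "Poly_Mapping.lookup (Abs_poly_mapping (f::'v::finite \<Rightarrow> 'b::zero)) = f"
  by (simp)

definition stdm :: "('r::finite \<Rightarrow> real^'n) \<Rightarrow> 'r set set \<Rightarrow> ('r + 'k \<Rightarrow>\<^sub>0 nat) \<Rightarrow> bool" where
  "stdm u Sig e \<longleftrightarrow> (\<exists>\<sigma>\<in>max_cones u Sig. \<forall>\<rho>. Poly_Mapping.lookup e (Inl \<rho>) \<noteq> 0 \<longrightarrow> \<rho> \<in> \<sigma>)"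

lemma stdm_down: "stdm u Sig (s + t) \<Longrightarrow> stdm u Sig t"
proof -
  assume "stdm u Sig (s + t)"
  then obtain \<sigma> where "\<sigma> \<in> max_cones u Sig" "\<forall>\<rho>. Poly_Mapping.lookup (s + t) (Inl \<rho>) \<noteq> 0 \<longrightarrow> \<rho> \<in> \<sigma>"
    unfolding stdm_def by blast
  then show ?thesis unfolding stdm_def
  proof (intro bexI[of _ \<sigma>] allI impI)
    fix \<rho> assume "Poly_Mapping.lookup t (Inl \<rho>) \<noteq> 0"
    then have "Poly_Mapping.lookup (s + t) (Inl \<rho>) \<noteq> 0" by (simp add: lookup_add)
    then show "\<rho> \<in> \<sigma>" using \<open>\<forall>\<rho>. _ \<longrightarrow> _\<close> by blast
  qed
qed

lemma mweight_split:
  fixes w :: "real^('r::finite + 'k::finite)" and p :: "'r \<Rightarrow> 'k"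
  shows "mweight w e = (\<Sum>\<rho>\<in>UNIV. div_of_weight p w \<rho> * real (Poly_Mapping.lookup e (Inl \<rho>)))
     + (\<Sum>k\<in>UNIV. w $ Inr k * real_of_int (degK p e k))"
proof -
  let ?e = "\<lambda>v. real (Poly_Mapping.lookup e v)"
  have m: "mweight w e = (\<Sum>\<rho>\<in>UNIV. w $ Inl \<rho> * ?e (Inl \<rho>)) + (\<Sum>k\<in>UNIV. w $ Inr k * ?e (Inr k))"
  proof -
    have "mweight w e = (\<Sum>v\<in>UNIV <+> UNIV. w $ v * ?e v)"
      unfolding mweight_def by (simp only: UNIV_Plus_UNIV)
    also have "\<dots> = sum ((\<lambda>v. w $ v * ?e v) \<circ> Inl) UNIV + sum ((\<lambda>v. w $ v * ?e v) \<circ> Inr) UNIV"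
      by (rule sum.Plus) simp_all
    finally show ?thesis by (simp only: comp_def)
  qed
  have g: "(\<Sum>k\<in>UNIV. w $ Inr k * (\<Sum>\<rho>\<in>{\<rho>. p \<rho> = k}. ?e (Inl \<rho>)))
      = (\<Sum>\<rho>\<in>UNIV. w $ Inr (p \<rho>) * ?e (Inl \<rho>))"
  proof -
    have "(\<Sum>k\<in>UNIV. w $ Inr k * (\<Sum>\<rho>\<in>{\<rho>. p \<rho> = k}. ?e (Inl \<rho>)))
        = (\<Sum>k\<in>UNIV. (\<Sum>\<rho>\<in>{\<rho>\<in>UNIV. p \<rho> = k}. w $ Inr (p \<rho>) * ?e (Inl \<rho>)))"
      by (simp add: sum_distrib_left)
    also have "\<dots> = (\<Sum>\<rho>\<in>UNIV. w $ Inr (p \<rho>) * ?e (Inl \<rho>))"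
      by (rule sum.group) auto
    finally show ?thesis .
  qed
  have "(\<Sum>\<rho>\<in>UNIV. div_of_weight p w \<rho> * ?e (Inl \<rho>)) + (\<Sum>k\<in>UNIV. w $ Inr k * real_of_int (degK p e k))
     = (\<Sum>\<rho>\<in>UNIV. w $ Inl \<rho> * ?e (Inl \<rho>)) - (\<Sum>\<rho>\<in>UNIV. w $ Inr (p \<rho>) * ?e (Inl \<rho>))
       + ((\<Sum>k\<in>UNIV. w $ Inr k * (\<Sum>\<rho>\<in>{\<rho>. p \<rho> = k}. ?e (Inl \<rho>))) + (\<Sum>k\<in>UNIV. w $ Inr k * ?e (Inr k)))"
    unfolding div_of_weight_def degK_def
    by (simp add: left_diff_distrib sum_subtractf distrib_left sum.distrib)
  also have "\<dots> = mweight w e" using g m by simp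
  finally show ?thesis by simp
qed

lemma degN_on:
  fixes u :: "'r::finite \<Rightarrow> real^'n"
  assumes "\<forall>\<rho>. Poly_Mapping.lookup e (Inl \<rho>) \<noteq> 0 \<longrightarrow> \<rho> \<in> \<sigma>"
  shows "degN u e = (\<Sum>\<rho>\<in>\<sigma>. real (Poly_Mapping.lookup e (Inl \<rho>)) *\<^sub>R u \<rho>)"
  unfolding degN_def using assms
  by (intro sum.mono_neutral_right) auto

lemma inner_degN: "m \<bullet> degN u e = (\<Sum>\<rho>\<in>UNIV. real (Poly_Mapping.lookup e (Inl \<rho>)) * (m \<bullet> u \<rho>))"
  unfolding degN_def by (simp add: inner_sum_right)

lemma propB:
  fixes u :: "'r::finite \<Rightarrow> real^'n" and p :: "'r \<Rightarrow> 'k::finite"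
  assumes sm: "smooth_fan u Sig" and wK: "w \<in> kahler_pre u Sig p"
    and sm_m: "stdm u Sig m" and sd: "sdeg u p a m" and ne: "a \<noteq> m"
  shows "mweight w m < mweight w a"
proof -
  let ?A = "div_of_weight p w"
  obtain \<sigma> where s: "\<sigma> \<in> max_cones u Sig" and supp: "\<forall>\<rho>. Poly_Mapping.lookup m (Inl \<rho>) \<noteq> 0 \<longrightarrow> \<rho> \<in> \<sigma>"
    using sm_m unfolding stdm_def by blast
  have sS: "\<sigma> \<in> Sig" using s unfolding max_cones_def by auto
  obtain \<mu> where mu1: "\<forall>\<rho>\<in>\<sigma>. \<mu> \<bullet> u \<rho> = - ?A \<rho>" and mu2: "\<forall>\<rho>. \<rho> \<notin> \<sigma> \<longrightarrow> \<mu> \<bullet> u \<rho> > - ?A \<rho>"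
    using wK s unfolding kahler_pre_def ample_div_def by blast
  define \<phi> where "\<phi> \<rho> = ?A \<rho> + \<mu> \<bullet> u \<rho>" for \<rho>
  have phi0: "\<phi> \<rho> = 0" if "\<rho> \<in> \<sigma>" for \<rho> using mu1 that by (simp add: \<phi>_def)
  have phipos: "\<phi> \<rho> > 0" if "\<rho> \<notin> \<sigma>" for \<rho> using mu2[rule_format, OF that] unfolding \<phi>_def by linarith
  have phinn: "\<phi> \<rho> \<ge> 0" for \<rho> using phi0 phipos by (cases "\<rho> \<in> \<sigma>") (auto intro: less_imp_le)
  have key: "mweight w e = (\<Sum>\<rho>\<in>UNIV. \<phi> \<rho> * real (Poly_Mapping.lookup e (Inl \<rho>))) - \<mu> \<bullet> degN u e
      + (\<Sum>k\<in>UNIV. w $ Inr k * real_of_int (degK p e k))" for e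
    unfolding mweight_split[where w=w and p=p and e=e] inner_degN \<phi>_def
    by (simp add: algebra_simps sum.distrib)
  have Pm: "(\<Sum>\<rho>\<in>UNIV. \<phi> \<rho> * real (Poly_Mapping.lookup m (Inl \<rho>))) = 0"
    using supp phi0 by (intro sum.neutral) auto
  have diff: "mweight w a - mweight w m = (\<Sum>\<rho>\<in>UNIV. \<phi> \<rho> * real (Poly_Mapping.lookup a (Inl \<rho>)))"
    using sd Pm unfolding key sdeg_def by simp
  show ?thesis
  proof (cases "\<exists>\<rho>. \<rho> \<notin> \<sigma> \<and> Poly_Mapping.lookup a (Inl \<rho>) \<noteq> 0")
    case True
    then obtain \<rho> where r: "\<rho> \<notin> \<sigma>" "Poly_Mapping.lookup a (Inl \<rho>) \<noteq> 0" by blast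
    have "(\<Sum>\<rho>\<in>UNIV. \<phi> \<rho> * real (Poly_Mapping.lookup a (Inl \<rho>))) > 0"
      by (rule sum_pos2[of UNIV \<rho>]) (use r phipos phinn in auto)
    then show ?thesis using diff by simp
  next
    case False
    then have suppa: "\<forall>\<rho>. Poly_Mapping.lookup a (Inl \<rho>) \<noteq> 0 \<longrightarrow> \<rho> \<in> \<sigma>" by blast
    have "degN u a = degN u m" using sd unfolding sdeg_def by simp
    then have "(\<Sum>\<rho>\<in>\<sigma>. real (Poly_Mapping.lookup a (Inl \<rho>)) *\<^sub>R u \<rho>)
        = (\<Sum>\<rho>\<in>\<sigma>. real (Poly_Mapping.lookup m (Inl \<rho>)) *\<^sub>R u \<rho>)"
      using degN_on[OF suppa, where u=u] degN_on[OF supp, where u=u] by simp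
    then have eqs: "Poly_Mapping.lookup a (Inl \<rho>) = Poly_Mapping.lookup m (Inl \<rho>)" if "\<rho> \<in> \<sigma>" for \<rho>
      using smooth_coeff_eq[OF sm sS _ that, of "\<lambda>\<rho>. real (Poly_Mapping.lookup a (Inl \<rho>))" "\<lambda>\<rho>. real (Poly_Mapping.lookup m (Inl \<rho>))"] by simp
    have eql: "Poly_Mapping.lookup a (Inl \<rho>) = Poly_Mapping.lookup m (Inl \<rho>)" for \<rho>
      using eqs suppa supp by metis
    have "degK p a k = degK p m k" for k using sd unfolding sdeg_def by simp
    then have eqr: "Poly_Mapping.lookup a (Inr k) = Poly_Mapping.lookup m (Inr k)" for k
      unfolding degK_def by (simp add: eql)
    have "a = m"
    proof (rule poly_mapping_eqI)
      fix v show "Poly_Mapping.lookup a v = Poly_Mapping.lookup m v"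
        by (cases v) (simp_all add: eql eqr)
    qed
    then show ?thesis using ne by simp
  qed
qed



lemma int_vec_sum:
  assumes "\<And>\<rho>. \<rho> \<in> S \<Longrightarrow> int_vec (u \<rho>)" "\<And>\<rho>. \<rho> \<in> S \<Longrightarrow> c \<rho> \<in> \<int>"
  shows "int_vec (\<Sum>\<rho>\<in>S. c \<rho> *\<^sub>R u \<rho>)"
  using assms unfolding int_vec_def by (auto simp: sum_component intro!: Ints_sum Ints_mult)

lemma int_vec_degN:
  fixes u :: "'r::finite \<Rightarrow> real^'n"
  assumes sm: "smooth_fan u Sig"
  shows "int_vec (degN u e)"
  unfolding degN_def using sm unfolding smooth_fan_def
  by (intro int_vec_sum) (auto intro: Ints_of_nat)

lemma sum_ind: "(\<Sum>\<rho>\<in>UNIV. f \<rho> * (if p \<rho> = k then 1 else 0)) = (\<Sum>\<rho>\<in>{\<rho>. p \<rho> = k}. (f \<rho>::real))"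
  for f :: "'r::finite \<Rightarrow> real"
proof -
  have "(\<lambda>\<rho>. f \<rho> * (if p \<rho> = k then 1 else 0)) = (\<lambda>\<rho>. if p \<rho> = k then f \<rho> else 0)" by auto
  then show ?thesis using sum.inter_filter[of UNIV f "\<lambda>\<rho>. p \<rho> = k"] by (simp only:) simp
qed

lemma int_span_max:
  fixes u :: "'r::finite \<Rightarrow> real^'n"
  assumes sm: "smooth_fan u Sig" and s: "\<sigma> \<in> max_cones u Sig" and x: "int_vec x"
  obtains c where "\<forall>\<rho>\<in>\<sigma>. c \<rho> \<in> \<int>" "x = (\<Sum>\<rho>\<in>\<sigma>. c \<rho> *\<^sub>R u \<rho>)"
proof -
  have sS: "\<sigma> \<in> Sig" using s unfolding max_cones_def by auto
  have "x \<in> span (u ` \<sigma>)" using span_max[OF sm s] by simp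
  then have "x \<in> int_span u \<sigma>" using sm sS x unfolding smooth_fan_def by blast
  then show ?thesis using that unfolding int_span_def by blast
qed

lemma Ints_nat_floor: "c \<in> \<int> \<Longrightarrow> 0 \<le> c \<Longrightarrow> real (nat \<lfloor>c\<rfloor>) = c"
  by (metis Ints_cases floor_of_int of_int_0_le_iff of_nat_nat)

lemma Ints_floor: "c \<in> \<int> \<Longrightarrow> real_of_int \<lfloor>c\<rfloor> = c"
  by (metis Ints_cases floor_of_int)

lemma propA:
  fixes u :: "'r::finite \<Rightarrow> real^'n" and p :: "'r \<Rightarrow> 'k::finite"
  assumes sm: "smooth_fan u Sig" and cf: "complete_fan u Sig" and np: "nef_partition u Sig p"
  shows "\<exists>m. stdm u Sig m \<and> sdeg u p m a"
proof -
  let ?a = "\<lambda>\<rho>. Poly_Mapping.lookup a (Inl \<rho>)"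
  define x where "x = degN u a"
  obtain \<sigma> where s: "\<sigma> \<in> max_cones u Sig" and xr: "x \<in> ray_cone u \<sigma>"
    using coverage[OF sm cf] by blast
  have sS: "\<sigma> \<in> Sig" using s unfolding max_cones_def by auto
  obtain d where d: "\<forall>\<rho>\<in>\<sigma>. 0 \<le> d \<rho>" "x = (\<Sum>\<rho>\<in>\<sigma>. d \<rho> *\<^sub>R u \<rho>)"
    using xr unfolding ray_cone_def by blast
  obtain c where c: "\<forall>\<rho>\<in>\<sigma>. c \<rho> \<in> \<int>" "x = (\<Sum>\<rho>\<in>\<sigma>. c \<rho> *\<^sub>R u \<rho>)"
    using int_span_max[OF sm s int_vec_degN[OF sm]] x_def by metis
  have cd: "c \<rho> = d \<rho>" if "\<rho> \<in> \<sigma>" for \<rho>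
    using smooth_coeff_eq[OF sm sS _ that, of c d] c d by simp
  define ci where "ci \<rho> = (if \<rho> \<in> \<sigma> then nat \<lfloor>c \<rho>\<rfloor> else 0)" for \<rho>
  have ci: "real (ci \<rho>) = (if \<rho> \<in> \<sigma> then c \<rho> else 0)" for \<rho>
    using c(1) d(1) cd by (auto simp: ci_def Ints_nat_floor)
  have ciN: "(\<Sum>\<rho>\<in>UNIV. real (ci \<rho>) *\<^sub>R u \<rho>) = x"
  proof -
    have "(\<Sum>\<rho>\<in>UNIV. real (ci \<rho>) *\<^sub>R u \<rho>) = (\<Sum>\<rho>\<in>\<sigma>. real (ci \<rho>) *\<^sub>R u \<rho>)"
      by (rule sum.mono_neutral_right) (auto simp: ci_def)
    also have "\<dots> = x" using c(2) ci by simp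
    finally show ?thesis .
  qed
  have bound: "(\<Sum>\<rho>\<in>{\<rho>. p \<rho> = k}. int (ci \<rho>)) \<le> degK p a k" for k
  proof -
    define E where "E \<rho> = (if p \<rho> = k then 1 else 0::real)" for \<rho>
    obtain \<mu> where mu1: "\<forall>\<rho>\<in>\<sigma>. \<mu> \<bullet> u \<rho> = - E \<rho>" and mu2: "\<forall>\<rho>. \<rho> \<notin> \<sigma> \<longrightarrow> \<mu> \<bullet> u \<rho> \<ge> - E \<rho>"
      using np s unfolding nef_partition_def nef_div_def E_def by blast
    have mu: "\<mu> \<bullet> u \<rho> \<ge> - E \<rho>" for \<rho> using mu1 mu2 by (cases "\<rho> \<in> \<sigma>") auto
    have "\<mu> \<bullet> x = (\<Sum>\<rho>\<in>UNIV. real (ci \<rho>) * (\<mu> \<bullet> u \<rho>))"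
      using ciN[symmetric] by (simp add: inner_sum_right)
    also have "\<dots> = (\<Sum>\<rho>\<in>UNIV. real (ci \<rho>) * (- E \<rho>))"
      by (rule sum.cong) (auto simp: ci_def mu1)
    finally have e1: "\<mu> \<bullet> x = - (\<Sum>\<rho>\<in>UNIV. real (ci \<rho>) * E \<rho>)" by (simp add: sum_negf)
    have "\<mu> \<bullet> x = (\<Sum>\<rho>\<in>UNIV. real (?a \<rho>) * (\<mu> \<bullet> u \<rho>))"
      unfolding x_def inner_degN ..
    also have "\<dots> \<ge> (\<Sum>\<rho>\<in>UNIV. real (?a \<rho>) * (- E \<rho>))"
    proof (rule sum_mono)
      fix \<rho> show "real (?a \<rho>) * (- E \<rho>) \<le> real (?a \<rho>) * (\<mu> \<bullet> u \<rho>)"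
        by (rule mult_left_mono[OF mu]) simp
    qed
    finally have e2: "- (\<Sum>\<rho>\<in>UNIV. real (?a \<rho>) * E \<rho>) \<le> \<mu> \<bullet> x" by (simp add: sum_negf)
    have "(\<Sum>\<rho>\<in>UNIV. real (ci \<rho>) * E \<rho>) \<le> (\<Sum>\<rho>\<in>UNIV. real (?a \<rho>) * E \<rho>)"
      using e1 e2 by linarith
    then have "(\<Sum>\<rho>\<in>{\<rho>. p \<rho> = k}. real (ci \<rho>)) \<le> (\<Sum>\<rho>\<in>{\<rho>. p \<rho> = k}. real (?a \<rho>))"
      unfolding E_def sum_ind .
    moreover have "real_of_int (\<Sum>\<rho>\<in>{\<rho>. p \<rho> = k}. int (ci \<rho>)) = (\<Sum>\<rho>\<in>{\<rho>. p \<rho> = k}. real (ci \<rho>))"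
      by simp
    moreover have "real_of_int (\<Sum>\<rho>\<in>{\<rho>. p \<rho> = k}. int (?a \<rho>)) = (\<Sum>\<rho>\<in>{\<rho>. p \<rho> = k}. real (?a \<rho>))"
      by simp
    ultimately have "real_of_int (\<Sum>\<rho>\<in>{\<rho>. p \<rho> = k}. int (ci \<rho>)) \<le> real_of_int (\<Sum>\<rho>\<in>{\<rho>. p \<rho> = k}. int (?a \<rho>))"
      by linarith
    then have "(\<Sum>\<rho>\<in>{\<rho>. p \<rho> = k}. int (ci \<rho>)) \<le> (\<Sum>\<rho>\<in>{\<rho>. p \<rho> = k}. int (?a \<rho>))"
      by (simp only: of_int_le_iff)
    then show ?thesis unfolding degK_def by simp
  qed
  define m where "m = Abs_poly_mapping (\<lambda>v. case v of Inl \<rho> \<Rightarrow> ci \<rho>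
      | Inr k \<Rightarrow> nat (degK p a k - (\<Sum>\<rho>\<in>{\<rho>. p \<rho> = k}. int (ci \<rho>))))"
  have lm: "Poly_Mapping.lookup m (Inl \<rho>) = ci \<rho>" for \<rho> by (simp add: m_def)
  have lm2: "Poly_Mapping.lookup m (Inr k) = nat (degK p a k - (\<Sum>\<rho>\<in>{\<rho>. p \<rho> = k}. int (ci \<rho>)))" for k
    by (simp add: m_def)
  have "stdm u Sig m" unfolding stdm_def using s by (auto simp: lm ci_def split: if_splits)
  moreover have "degN u m = degN u a"
  proof -
    have "degN u m = (\<Sum>\<rho>\<in>UNIV. real (ci \<rho>) *\<^sub>R u \<rho>)" by (simp add: degN_def lm)
    then show ?thesis using ciN x_def by simp
  qed
  moreover have "degK p m = degK p a"
  proof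
    fix k show "degK p m k = degK p a k"
      using bound[of k] unfolding degK_def[of p m] by (simp add: lm lm2)
  qed
  ultimately show ?thesis unfolding sdeg_def by blast
qed



lemma natdiff_real: "real (nat x) - real (nat (- x)) = real_of_int x"
  by (cases "x \<ge> 0") auto

lemma natdiff2: "int (nat x) - x = int (nat (- x))"
  by (cases "x \<ge> 0") auto

lemma propNef:
  fixes u :: "'r::finite \<Rightarrow> real^'n" and p :: "'r \<Rightarrow> 'k::finite" and w :: "real^('r+'k)"
  assumes sm: "smooth_fan u Sig"
    and B: "\<And>a m. stdm u Sig m \<Longrightarrow> sdeg u p a m \<Longrightarrow> mweight w m \<le> mweight w a"
  shows "nef_div u Sig (div_of_weight p w)"
  unfolding nef_div_def
proof
  fix \<sigma> assume s: "\<sigma> \<in> max_cones u Sig"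
  let ?A = "div_of_weight p w"
  have sS: "\<sigma> \<in> Sig" using s unfolding max_cones_def by auto
  have inj: "inj_on u \<sigma>" and ind: "\<not> dependent (u ` \<sigma>)" using sm sS unfolding smooth_fan_def by auto
  obtain g where g: "linear g" "\<forall>x\<in>u ` \<sigma>. g x = - ?A (inv_into \<sigma> u x)"
    using linear_independent_extend[OF ind, of "\<lambda>x. - ?A (inv_into \<sigma> u x)"] by blast
  define \<mu> where "\<mu> = adjoint g 1"
  have mug: "\<mu> \<bullet> v = g v" for v
    using adjoint_works[OF g(1), of v 1] unfolding \<mu>_def by (simp add: inner_commute)
  have mu1: "\<mu> \<bullet> u \<rho> = - ?A \<rho>" if "\<rho> \<in> \<sigma>" for \<rho>
    using g(2) that by (simp add: mug inv_into_f_f[OF inj])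
  have mu2: "\<mu> \<bullet> u \<rho> \<ge> - ?A \<rho>" if r: "\<rho> \<notin> \<sigma>" for \<rho>
  proof -
    have iv: "int_vec (u \<rho>)" using sm unfolding smooth_fan_def by auto
    obtain c where c: "\<forall>\<rho>\<in>\<sigma>. c \<rho> \<in> \<int>" "u \<rho> = (\<Sum>\<rho>\<in>\<sigma>. c \<rho> *\<^sub>R u \<rho>)"
      using int_span_max[OF sm s iv] by metis
    define ci where "ci \<rho>' = (if \<rho>' \<in> \<sigma> then \<lfloor>c \<rho>'\<rfloor> else 0)" for \<rho>'
    have ci: "real_of_int (ci \<rho>') = (if \<rho>' \<in> \<sigma> then c \<rho>' else 0)" for \<rho>'
      using c(1) by (auto simp: ci_def Ints_floor)
    have ciN: "(\<Sum>\<rho>'\<in>UNIV. real_of_int (ci \<rho>') *\<^sub>R u \<rho>') = u \<rho>"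
    proof -
      have "(\<Sum>\<rho>'\<in>UNIV. real_of_int (ci \<rho>') *\<^sub>R u \<rho>') = (\<Sum>\<rho>'\<in>\<sigma>. real_of_int (ci \<rho>') *\<^sub>R u \<rho>')"
        by (rule sum.mono_neutral_right) (auto simp: ci_def)
      also have "\<dots> = u \<rho>" using c(2) ci by simp
      finally show ?thesis .
    qed
    have ciA: "(\<Sum>\<rho>'\<in>UNIV. ?A \<rho>' * real_of_int (ci \<rho>')) = - (\<mu> \<bullet> u \<rho>)"
    proof -
      have "\<mu> \<bullet> u \<rho> = (\<Sum>\<rho>'\<in>UNIV. real_of_int (ci \<rho>') * (\<mu> \<bullet> u \<rho>'))"
        by (subst ciN[symmetric]) (simp add: inner_sum_right)
      also have "\<dots> = (\<Sum>\<rho>'\<in>UNIV. - (?A \<rho>' * real_of_int (ci \<rho>')))"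
        by (rule sum.cong) (auto simp: ci_def mu1)
      finally show ?thesis by (simp add: sum_negf)
    qed
    define M where "M = (\<Sum>\<rho>'\<in>UNIV. \<bar>ci \<rho>'\<bar>)"
    have M0: "M \<ge> 0" unfolding M_def by (simp add: sum_nonneg)
    have Mk: "(\<Sum>\<rho>'\<in>{\<rho>'. p \<rho>' = k}. ci \<rho>') \<le> M" for k
    proof -
      have "(\<Sum>\<rho>'\<in>{\<rho>'. p \<rho>' = k}. ci \<rho>') \<le> (\<Sum>\<rho>'\<in>{\<rho>'. p \<rho>' = k}. \<bar>ci \<rho>'\<bar>)"
        by (rule sum_mono) simp
      also have "\<dots> \<le> M" unfolding M_def by (rule sum_mono2) auto
      finally show ?thesis .
    qed
    define ind where "ind \<rho>' = (if \<rho>' = \<rho> then 1 else 0::nat)" for \<rho>'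
    define a :: "('r + 'k) \<Rightarrow>\<^sub>0 nat" where "a = Abs_poly_mapping (\<lambda>v. case v of Inl \<rho>' \<Rightarrow> ind \<rho>' + nat (- ci \<rho>')
        | Inr k \<Rightarrow> nat M)"
    define m where "m = Abs_poly_mapping (\<lambda>v. case v of Inl \<rho>' \<Rightarrow> nat (ci \<rho>')
        | Inr k \<Rightarrow> nat (M + (if p \<rho> = k then 1 else 0) - (\<Sum>\<rho>'\<in>{\<rho>'. p \<rho>' = k}. ci \<rho>')))"
    have la: "Poly_Mapping.lookup a (Inl \<rho>') = ind \<rho>' + nat (- ci \<rho>')"
      "Poly_Mapping.lookup a (Inr k) = nat M" for \<rho>' k by (simp_all add: a_def)
    have lm: "Poly_Mapping.lookup m (Inl \<rho>') = nat (ci \<rho>')"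
      "Poly_Mapping.lookup m (Inr k) = nat (M + (if p \<rho> = k then 1 else 0) - (\<Sum>\<rho>'\<in>{\<rho>'. p \<rho>' = k}. ci \<rho>'))"
      for \<rho>' k by (simp_all add: m_def)
    have stdm: "stdm u Sig m" unfolding stdm_def using s by (auto simp: lm ci_def split: if_splits)
    have sumind: "(\<Sum>\<rho>'\<in>S. f \<rho>' * real (ind \<rho>')) = (if \<rho> \<in> S then f \<rho> else 0)" if "finite S" for S and f :: "'r \<Rightarrow> real"
    proof -
      have "(\<Sum>\<rho>'\<in>S. f \<rho>' * real (ind \<rho>')) = (\<Sum>\<rho>'\<in>S. if \<rho>' = \<rho> then f \<rho>' else 0)"
        by (rule sum.cong) (auto simp: ind_def)
      then show ?thesis using that by simp
    qed
    have dN: "degN u a = degN u m"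
    proof -
      have "degN u m - degN u a = (\<Sum>\<rho>'\<in>UNIV. (real (nat (ci \<rho>')) - real (nat (- ci \<rho>')) - real (ind \<rho>')) *\<^sub>R u \<rho>')"
        unfolding degN_def la lm by (simp add: sum_subtractf[symmetric] scaleR_diff_left algebra_simps)
      also have "\<dots> = (\<Sum>\<rho>'\<in>UNIV. real_of_int (ci \<rho>') *\<^sub>R u \<rho>') - (\<Sum>\<rho>'\<in>UNIV. real (ind \<rho>') *\<^sub>R u \<rho>')"
        by (simp add: natdiff_real scaleR_diff_left sum_subtractf)
      also have "(\<Sum>\<rho>'\<in>UNIV. real (ind \<rho>') *\<^sub>R u \<rho>') = u \<rho>"
      proof -
        have "(\<Sum>\<rho>'\<in>UNIV. real (ind \<rho>') *\<^sub>R u \<rho>') = (\<Sum>\<rho>'\<in>UNIV. if \<rho>' = \<rho> then u \<rho>' else 0)"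
          by (rule sum.cong) (auto simp: ind_def)
        then show ?thesis by simp
      qed
      finally show ?thesis using ciN by simp
    qed
    have dK: "degK p a = degK p m"
    proof
      fix k
      have i1: "(\<Sum>\<rho>'\<in>{\<rho>'. p \<rho>' = k}. int (ind \<rho>')) = (if p \<rho> = k then 1 else 0)"
      proof -
        have "(\<Sum>\<rho>'\<in>{\<rho>'. p \<rho>' = k}. int (ind \<rho>')) = (\<Sum>\<rho>'\<in>{\<rho>'. p \<rho>' = k}. if \<rho>' = \<rho> then 1 else 0)"
          by (rule sum.cong) (auto simp: ind_def)
        then show ?thesis by simp
      qed
      have "degK p a k = (\<Sum>\<rho>'\<in>{\<rho>'. p \<rho>' = k}. int (ind \<rho>')) + (\<Sum>\<rho>'\<in>{\<rho>'. p \<rho>' = k}. int (nat (- ci \<rho>'))) + M"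
        unfolding degK_def la using M0 by (simp add: sum.distrib)
      moreover have "degK p m k = (\<Sum>\<rho>'\<in>{\<rho>'. p \<rho>' = k}. int (nat (ci \<rho>'))) + (M + (if p \<rho> = k then 1 else 0) - (\<Sum>\<rho>'\<in>{\<rho>'. p \<rho>' = k}. ci \<rho>'))"
        unfolding degK_def lm using Mk[of k] M0 by simp
      moreover have "(\<Sum>\<rho>'\<in>{\<rho>'. p \<rho>' = k}. int (nat (ci \<rho>'))) - (\<Sum>\<rho>'\<in>{\<rho>'. p \<rho>' = k}. ci \<rho>')
          = (\<Sum>\<rho>'\<in>{\<rho>'. p \<rho>' = k}. int (nat (- ci \<rho>')))"
      proof -
        have "(\<Sum>\<rho>'\<in>{\<rho>'. p \<rho>' = k}. int (nat (ci \<rho>'))) - (\<Sum>\<rho>'\<in>{\<rho>'. p \<rho>' = k}. ci \<rho>')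
           = (\<Sum>\<rho>'\<in>{\<rho>'. p \<rho>' = k}. int (nat (ci \<rho>')) - ci \<rho>')"
          by (simp add: sum_subtractf)
        also have "\<dots> = (\<Sum>\<rho>'\<in>{\<rho>'. p \<rho>' = k}. int (nat (- ci \<rho>')))"
          by (rule sum.cong) (simp_all add: natdiff2)
        finally show ?thesis .
      qed
      ultimately show "degK p a k = degK p m k" using i1 by simp
    qed
    have "mweight w m \<le> mweight w a" using B[OF stdm] dN dK unfolding sdeg_def by blast
    then have le: "(\<Sum>\<rho>'\<in>UNIV. ?A \<rho>' * real (nat (ci \<rho>'))) \<le> (\<Sum>\<rho>'\<in>UNIV. ?A \<rho>' * real (ind \<rho>' + nat (- ci \<rho>')))"
      unfolding mweight_split[where w=w and p=p and e=a] mweight_split[where w=w and p=p and e=m] dK la lm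
      by simp
    have "(\<Sum>\<rho>'\<in>UNIV. ?A \<rho>' * real (ind \<rho>' + nat (- ci \<rho>'))) - (\<Sum>\<rho>'\<in>UNIV. ?A \<rho>' * real (nat (ci \<rho>')))
        = (\<Sum>\<rho>'\<in>UNIV. ?A \<rho>' * real (ind \<rho>')) - (\<Sum>\<rho>'\<in>UNIV. ?A \<rho>' * (real (nat (ci \<rho>')) - real (nat (- ci \<rho>'))))"
    proof -
      have "(\<Sum>\<rho>'\<in>UNIV. ?A \<rho>' * real (ind \<rho>' + nat (- ci \<rho>'))) - (\<Sum>\<rho>'\<in>UNIV. ?A \<rho>' * real (nat (ci \<rho>')))
        = (\<Sum>\<rho>'\<in>UNIV. ?A \<rho>' * real (ind \<rho>' + nat (- ci \<rho>')) - ?A \<rho>' * real (nat (ci \<rho>')))"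
        by (simp only: sum_subtractf)
      also have "\<dots> = (\<Sum>\<rho>'\<in>UNIV. ?A \<rho>' * real (ind \<rho>') - ?A \<rho>' * (real (nat (ci \<rho>')) - real (nat (- ci \<rho>'))))"
        by (rule sum.cong) (simp_all add: algebra_simps)
      also have "\<dots> = (\<Sum>\<rho>'\<in>UNIV. ?A \<rho>' * real (ind \<rho>')) - (\<Sum>\<rho>'\<in>UNIV. ?A \<rho>' * (real (nat (ci \<rho>')) - real (nat (- ci \<rho>'))))"
        by (simp only: sum_subtractf)
      finally show ?thesis .
    qed
    also have "\<dots> = ?A \<rho> - (\<Sum>\<rho>'\<in>UNIV. ?A \<rho>' * real_of_int (ci \<rho>'))"
      by (simp add: sumind natdiff_real)
    finally show ?thesis using le ciA by linarith
  qed
  show "\<exists>m::real^'n. (\<forall>\<rho>\<in>\<sigma>. m \<bullet> u \<rho> = - ?A \<rho>) \<and> (\<forall>\<rho>. \<rho> \<notin> \<sigma> \<longrightarrow> m \<bullet> u \<rho> \<ge> - ?A \<rho>)"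
    using mu1 mu2 by blast
qed



lemma div_of_weight_lin: "div_of_weight p (w + t *\<^sub>R w0) = (\<lambda>\<rho>. div_of_weight p w \<rho> + t * div_of_weight p w0 \<rho>)"
  unfolding div_of_weight_def by (auto simp: algebra_simps)

lemma nef_ample:
  assumes "nef_div u Sig a" "ample_div u Sig a0" "t > 0"
  shows "ample_div u Sig (\<lambda>\<rho>. a \<rho> + t * a0 \<rho>)"
  unfolding ample_div_def
proof
  fix \<sigma> assume s: "\<sigma> \<in> max_cones u Sig"
  obtain m1 where m1: "\<forall>\<rho>\<in>\<sigma>. m1 \<bullet> u \<rho> = - a \<rho>" "\<forall>\<rho>. \<rho> \<notin> \<sigma> \<longrightarrow> m1 \<bullet> u \<rho> \<ge> - a \<rho>"
    using assms(1) s unfolding nef_div_def by blast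
  obtain m0 where m0: "\<forall>\<rho>\<in>\<sigma>. m0 \<bullet> u \<rho> = - a0 \<rho>" "\<forall>\<rho>. \<rho> \<notin> \<sigma> \<longrightarrow> m0 \<bullet> u \<rho> > - a0 \<rho>"
    using assms(2) s unfolding ample_div_def by blast
  show "\<exists>m. (\<forall>\<rho>\<in>\<sigma>. m \<bullet> u \<rho> = - (a \<rho> + t * a0 \<rho>)) \<and> (\<forall>\<rho>. \<rho> \<notin> \<sigma> \<longrightarrow> m \<bullet> u \<rho> > - (a \<rho> + t * a0 \<rho>))"
  proof (intro exI[of _ "m1 + t *\<^sub>R m0"] conjI ballI allI impI)
    fix \<rho> assume "\<rho> \<in> \<sigma>"
    then show "(m1 + t *\<^sub>R m0) \<bullet> u \<rho> = - (a \<rho> + t * a0 \<rho>)"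
      using m1 m0 by (simp add: inner_add_left)
  next
    fix \<rho> assume r: "\<rho> \<notin> \<sigma>"
    have "t * (m0 \<bullet> u \<rho>) > t * (- a0 \<rho>)" using m0(2) r assms(3) by (intro mult_strict_left_mono) auto
    then show "(m1 + t *\<^sub>R m0) \<bullet> u \<rho> > - (a \<rho> + t * a0 \<rho>)"
      using m1(2)[rule_format, OF r] by (simp add: inner_add_left)
  qed
qed

lemma nef_closure:
  assumes w0: "w0 \<in> kahler_pre u Sig p" and nef: "nef_div u Sig (div_of_weight p w)"
  shows "w \<in> closure (kahler_pre u Sig p)"
  unfolding closure_approachable
proof (intro allI impI)
  fix e :: real assume e: "e > 0"
  define t where "t = e / (norm w0 + 1)"
  have np1: "norm w0 + 1 > 0" by (simp add: add_nonneg_pos)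
  then have t: "t > 0" using e by (simp add: t_def)
  have "w + t *\<^sub>R w0 \<in> kahler_pre u Sig p"
  proof -
    have "ample_div u Sig (\<lambda>\<rho>. div_of_weight p w \<rho> + t * div_of_weight p w0 \<rho>)"
      by (rule nef_ample[OF nef _ t]) (use w0 in \<open>simp add: kahler_pre_def\<close>)
    then show ?thesis unfolding kahler_pre_def by (simp add: div_of_weight_lin)
  qed
  moreover have "dist (w + t *\<^sub>R w0) w < e"
  proof -
    have "dist (w + t *\<^sub>R w0) w = t * norm w0" using t by (simp add: dist_norm)
    also have "\<dots> < t * (norm w0 + 1)" using t by simp
    also have "\<dots> = e" using np1 by (simp add: t_def)
    finally show ?thesis .
  qed
  ultimately show "\<exists>y\<in>kahler_pre u Sig p. dist y w < e" by blast
qed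

theorem mainTheorem4:
  fixes u :: "'r::finite \<Rightarrow> real^'n"
    and Sig :: "'r set set"
    and p :: "'r \<Rightarrow> 'k::finite"
  assumes "smooth_fan u Sig"
    and "complete_fan u Sig"
    and "projective_fan u Sig"
    and "nef_partition u Sig p"
  shows "\<exists>w. closure (kahler_pre u Sig p) = groebner_cone (toric_ideal u p) w"
proof -
  note sm = assms(1) and cf = assms(2) and np = assms(4)
  obtain a0 where a0: "ample_div u Sig a0" using assms(3) unfolding projective_fan_def by blast
  define w0 :: "real^('r+'k)" where "w0 = (\<chi> v. case v of Inl \<rho> \<Rightarrow> a0 \<rho> | Inr k \<Rightarrow> 0)"
  have "div_of_weight p w0 = a0" unfolding div_of_weight_def w0_def by simp
  then have w0K: "w0 \<in> kahler_pre u Sig p" using a0 unfolding kahler_pre_def by simp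
  let ?K = "kahler_pre u Sig p" and ?I = "toric_ideal u p"
  let ?N = "{g. \<forall>e\<in>Poly_Mapping.keys g. \<not> stdm u Sig e}"
  have onK: "init_ideal w ?I = ?N" if "w \<in> ?K" for w
  proof (rule P1_abstract)
    show "\<exists>m. stdm u Sig m \<and> sdeg u p m a" for a using propA[OF sm cf np] .
    show "mweight w m < mweight w a" if "stdm u Sig m" "sdeg u p a m" "a \<noteq> m" for a m
      using propB[OF sm \<open>w \<in> ?K\<close> that] .
    show "stdm u Sig t" if "stdm u Sig (s + t)" for s t :: "('r + 'k) \<Rightarrow>\<^sub>0 nat" using stdm_down that .
  qed
  define C where "C = {w'. init_ideal w' ?I = init_ideal w0 ?I}"
  have C: "C = {w'. init_ideal w' ?I = ?N}" unfolding C_def using onK[OF w0K] by simp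
  have KC: "?K \<subseteq> C" unfolding C using onK by blast
  have CK: "C \<subseteq> closure ?K"
  proof
    fix w' assume "w' \<in> C"
    then have eq: "init_ideal w' ?I = ?N" unfolding C by simp
    have "nef_div u Sig (div_of_weight p w')"
      by (rule propNef[OF sm]) (rule P2_abstract[OF eq])
    then show "w' \<in> closure ?K" using nef_closure[OF w0K] by blast
  qed
  have "closure ?K = closure C"
  proof
    show "closure ?K \<subseteq> closure C" using KC by (rule closure_mono)
    show "closure C \<subseteq> closure ?K" using closure_mono[OF CK] by simp
  qed
  then show ?thesis unfolding groebner_cone_def C_def by blast
qed


end
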